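(* Let $\alpha$ be a sentence, $\phi,\psi,\beta$ formulas, and $\Gamma$ a set of formulas. If $\Gamma,\alpha\vdash\phi$ and $\Gamma,\beta\vdash\psi$, then $\Gamma,\alpha\vee\beta\vdash\phi\vee\psi$.
   Context: Fix a countable predicate language $\mathcal L$ consisting of variables, constant symbols and predicate symbols (so terms are just variables and constants), with connectives $\to$, $\&$, the propositional constant $0$ and quantifiers $\forall,\exists$. Abbreviations: $\phi\wedge\psi$ is $\phi\&(\phi\to\psi)$; $\phi\vee\psi$ is $((\phi\to\psi)\to\psi)\wedge((\psi\to\phi)\to\phi)$; $\neg\phi$ is $\phi\to 0$; $1$ is $0\to 0$; $\beta^n$ is $\beta\&\cdots\&\beta$ ($n$ factors). $\phi(x/t)$ denotes the result of substituting the term $t$ for the free occurrences of $x$ in $\phi$. A sentence is a formula with no free variables; a theory is any set of formulas. Hájek's basic predicate logic BL$\forall$ has the axiom schemata (A1) $(\phi\to\psi)\to((\psi\to\chi)\to(\phi\to\chi))$; (A2) $(\phi\&\psi)\to\phi$; (A3) $(\phi\&\psi)\to(\psi\&\phi)$; (A4) $(\phi\&(\phi\to\psi))\to(\psi\&(\psi\to\phi))$; (A5) $(\phi\to(\psi\to\chi))\to((\phi\&\psi)\to\chi)$; (A6) $((\phi\&\psi)\to\chi)\to(\phi\to(\psi\to\chi))$; (A7) $((\phi\to\psi)\to\chi)\to(((\psi\to\phi)\to\chi)\to\chi)$; (A8) $0\to\phi$; ($\forall$1) $\forall x\phi\to\phi(x/t)$ and ($\exists$1) $\phi(x/t)\to\exists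 x\phi$, for $t$ substitutable for $x$ in $\phi$; ($\forall$2) $\forall x(\phi\to\psi)\to(\phi\to\forall x\psi)$, ($\exists$2) $\forall x(\psi\to\phi)\to(\exists x\psi\to\phi)$ and (Lin) $\forall x(\psi\vee\phi)\to((\forall x\psi)\vee\phi)$, each with $x$ not free in $\phi$; its rules are modus ponens (from $\phi$ and $\phi\to\psi$ infer $\psi$) and generalization (from $\phi$ infer $\forall x\phi$). The logic $\vdash$ extends BL$\forall$ by the axiom schema (RC) $\forall x(\chi\&\chi)\to((\forall x\chi)\&(\forall x\chi))$ for every formula $\chi$, and the infinitary rule (Inf): from all of $\phi\vee(\alpha\to\beta^n)$, $n\in\mathbb N$, infer $\phi\vee(\alpha\to(\alpha\&\beta))$, where $\phi,\alpha,\beta$ are sentences. A proof from $\Gamma$ is a sequence $(\phi_i)_{i\le\xi}$ indexed by the ordinals up to some ordinal $\xi$ such that each $\phi_i$ is an axiom of BL$\forall$, an instance of (RC), a member of $\Gamma$, or is obtained from formulas in $\{\phi_j: j<i\}$ by modus ponens, generalization, or (Inf). $\Gamma\vdash\phi$ means there is a proof from $\Gamma$ whose last member is $\phi$; $\Gamma,\psi\vdash\phi$ means $\Gamma\cup\{\psi\}\vdash\phi$. *)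

theory Defs
  imports Main "HOL-Library.Countable"
begin

datatype 'c trm = Var nat | Const 'c

datatype ('c, 'p) fm =
    Atom 'p "'c trm list"
  | Imp "('c, 'p) fm" "('c, 'p) fm"
  | SConj "('c, 'p) fm" "('c, 'p) fm"
  | Zero
  | All nat "('c, 'p) fm"
  | Ex nat "('c, 'p) fm"

fun tvars :: "'c trm \<Rightarrow> nat set" where
  "tvars (Var x) = {x}"
| "tvars (Const c) = {}"

fun fv :: "('c, 'p) fm \<Rightarrow> nat set" where
  "fv (Atom P ts) = (\<Union>t\<in>set ts. tvars t)"
| "fv (Imp a b) = fv a \<union> fv b"
| "fv (SConj a b) = fv a \<union> fv b"
| "fv Zero = {}"
| "fv (All x a) = fv a - {x}"
| "fv (Ex x a) = fv a - {x}"

definition sentence :: "('c, 'p) fm \<Rightarrow> bool" where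
  "sentence \<phi> \<longleftrightarrow> fv \<phi> = {}"

fun tsubst :: "nat \<Rightarrow> 'c trm \<Rightarrow> 'c trm \<Rightarrow> 'c trm" where
  "tsubst x t (Var y) = (if y = x then t else Var y)"
| "tsubst x t (Const c) = Const c"

fun subst :: "nat \<Rightarrow> 'c trm \<Rightarrow> ('c, 'p) fm \<Rightarrow> ('c, 'p) fm" where
  "subst x t (Atom P ts) = Atom P (map (tsubst x t) ts)"
| "subst x t (Imp a b) = Imp (subst x t a) (subst x t b)"
| "subst x t (SConj a b) = SConj (subst x t a) (subst x t b)"
| "subst x t Zero = Zero"
| "subst x t (All y a) = (if y = x then All y a else All y (subst x t a))"
| "subst x t (Ex y a) = (if y = x then Ex y a else Ex y (subst x t a))"

fun substitutable :: "'c trm \<Rightarrow> nat \<Rightarrow> ('c, 'p) fm \<Rightarrow> bool" where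
  "substitutable t x (Atom P ts) = True"
| "substitutable t x (Imp a b) = (substitutable t x a \<and> substitutable t x b)"
| "substitutable t x (SConj a b) = (substitutable t x a \<and> substitutable t x b)"
| "substitutable t x Zero = True"
| "substitutable t x (All y a) =
     (x \<notin> fv (All y a) \<or> (y \<notin> tvars t \<and> substitutable t x a))"
| "substitutable t x (Ex y a) =
     (x \<notin> fv (Ex y a) \<or> (y \<notin> tvars t \<and> substitutable t x a))"

definition Wedge :: "('c, 'p) fm \<Rightarrow> ('c, 'p) fm \<Rightarrow> ('c, 'p) fm" where
  "Wedge a b = SConj a (Imp a b)"

definition Vee :: "('c, 'p) fm \<Rightarrow> ('c, 'p) fm \<Rightarrow> ('c, 'p) fm" where
  "Vee a b = Wedge (Imp (Imp a b) b) (Imp (Imp b a) a)"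

definition Neg :: "('c, 'p) fm \<Rightarrow> ('c, 'p) fm" where
  "Neg a = Imp a Zero"

definition One :: "('c, 'p) fm" where
  "One = Imp Zero Zero"

text \<open>fpow n b is b \& ... \& b with n factors (meaningful for n \<ge> 1; n = 0 gives One).\<close>
fun fpow :: "nat \<Rightarrow> ('c, 'p) fm \<Rightarrow> ('c, 'p) fm" where
  "fpow 0 b = One"
| "fpow (Suc 0) b = b"
| "fpow (Suc (Suc n)) b = SConj b (fpow (Suc n) b)"

inductive BLax :: "('c, 'p) fm \<Rightarrow> bool" where
  A1: "BLax (Imp (Imp \<phi> \<psi>) (Imp (Imp \<psi> \<chi>) (Imp \<phi> \<chi>)))"
| A2: "BLax (Imp (SConj \<phi> \<psi>) \<phi>)"
| A3: "BLax (Imp (SConj \<phi> \<psi>) (SConj \<psi> \<phi>))"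
| A4: "BLax (Imp (SConj \<phi> (Imp \<phi> \<psi>)) (SConj \<psi> (Imp \<psi> \<phi>)))"
| A5: "BLax (Imp (Imp \<phi> (Imp \<psi> \<chi>)) (Imp (SConj \<phi> \<psi>) \<chi>))"
| A6: "BLax (Imp (Imp (SConj \<phi> \<psi>) \<chi>) (Imp \<phi> (Imp \<psi> \<chi>)))"
| A7: "BLax (Imp (Imp (Imp \<phi> \<psi>) \<chi>) (Imp (Imp (Imp \<psi> \<phi>) \<chi>) \<chi>))"
| A8: "BLax (Imp Zero \<phi>)"
| All1: "substitutable t x \<phi> \<Longrightarrow> BLax (Imp (All x \<phi>) (subst x t \<phi>))"
| Ex1: "substitutable t x \<phi> \<Longrightarrow> BLax (Imp (subst x t \<phi>) (Ex x \<phi>))"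
| All2: "x \<notin> fv \<phi> \<Longrightarrow> BLax (Imp (All x (Imp \<phi> \<psi>)) (Imp \<phi> (All x \<psi>)))"
| Ex2: "x \<notin> fv \<phi> \<Longrightarrow> BLax (Imp (All x (Imp \<psi> \<phi>)) (Imp (Ex x \<psi>) \<phi>))"
| Lin: "x \<notin> fv \<phi> \<Longrightarrow> BLax (Imp (All x (Vee \<psi> \<phi>)) (Vee (All x \<psi>) \<phi>))"

text \<open>This is exactly
  the set of last members of (transfinite, ordinal-indexed) proofs from \<Gamma>.\<close>
inductive deriv :: "('c, 'p) fm set \<Rightarrow> ('c, 'p) fm \<Rightarrow> bool" where
  ax: "BLax \<phi> \<Longrightarrow> deriv \<Gamma> \<phi>"
| RC: "deriv \<Gamma> (Imp (All x (SConj \<chi> \<chi>)) (SConj (All x \<chi>) (All x \<chi>)))"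
| hyp: "\<phi> \<in> \<Gamma> \<Longrightarrow> deriv \<Gamma> \<phi>"
| MP: "deriv \<Gamma> \<phi> \<Longrightarrow> deriv \<Gamma> (Imp \<phi> \<psi>) \<Longrightarrow> deriv \<Gamma> \<psi>"
| Gen: "deriv \<Gamma> \<phi> \<Longrightarrow> deriv \<Gamma> (All x \<phi>)"
| Inf: "sentence \<phi> \<Longrightarrow> sentence \<alpha> \<Longrightarrow> sentence \<beta> \<Longrightarrow>
        (\<forall>n\<ge>1. deriv \<Gamma> (Vee \<phi> (Imp \<alpha> (fpow n \<beta>)))) \<Longrightarrow>
        deriv \<Gamma> (Vee \<phi> (Imp \<alpha> (SConj \<alpha> \<beta>)))"

end

theory Submission
  imports Defs
begin

lemma ax1: "deriv G (Imp (Imp p q) (Imp (Imp q r) (Imp p r)))" by (rule deriv.ax, rule BLax.A1)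
lemma ax2: "deriv G (Imp (SConj p q) p)" by (rule deriv.ax, rule BLax.A2)
lemma ax3: "deriv G (Imp (SConj p q) (SConj q p))" by (rule deriv.ax, rule BLax.A3)
lemma ax4: "deriv G (Imp (SConj p (Imp p q)) (SConj q (Imp q p)))" by (rule deriv.ax, rule BLax.A4)
lemma ax5: "deriv G (Imp (Imp p (Imp q r)) (Imp (SConj p q) r))" by (rule deriv.ax, rule BLax.A5)
lemma ax6: "deriv G (Imp (Imp (SConj p q) r) (Imp p (Imp q r)))" by (rule deriv.ax, rule BLax.A6)
lemma ax7: "deriv G (Imp (Imp (Imp p q) r) (Imp (Imp (Imp q p) r) r))" by (rule deriv.ax, rule BLax.A7)
lemma ax8: "deriv G (Imp Zero p)" by (rule deriv.ax, rule BLax.A8)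

lemmas mp = deriv.MP

lemma tr: "deriv G (Imp a b) \<Longrightarrow> deriv G (Imp b c) \<Longrightarrow> deriv G (Imp a c)"
proof -
  assume h1: "deriv G (Imp a b)" and h2: "deriv G (Imp b c)"
  show ?thesis by (rule mp[OF h2 mp[OF h1 ax1]])
qed

lemma exch: "deriv G (Imp a (Imp b c)) \<Longrightarrow> deriv G (Imp b (Imp a c))"
proof -
  assume h: "deriv G (Imp a (Imp b c))"
  have "deriv G (Imp (SConj a b) c)" by (rule mp[OF h ax5])
  then have "deriv G (Imp (SConj b a) c)" by (rule tr[OF ax3])
  then show ?thesis by (rule mp[OF _ ax6])
qed

lemma kk: "deriv G (Imp a (Imp b a))" by (rule mp[OF ax2 ax6])

lemma ii: "deriv G (Imp a a)"
proof -
  have "deriv G (Imp (Imp Zero Zero) (Imp a a))" by (rule exch[OF kk])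
  then show ?thesis by (rule mp[OF ax8])
qed

lemma pair: "deriv G (Imp a (Imp b (SConj a b)))" by (rule mp[OF ii ax6])

lemma postc: "deriv G (Imp b c) \<Longrightarrow> deriv G (Imp (Imp a b) (Imp a c))"
  by (rule mp, assumption, rule exch[OF ax1])

lemma prec: "deriv G (Imp a b) \<Longrightarrow> deriv G (Imp (Imp b c) (Imp a c))"
  by (rule mp[OF _ ax1])

lemma smono: "deriv G (Imp b c) \<Longrightarrow> deriv G (Imp (SConj a b) (SConj a c))"
proof -
  assume h: "deriv G (Imp b c)"
  have "deriv G (Imp (Imp c (SConj a c)) (Imp b (SConj a c)))" by (rule prec[OF h])
  then have "deriv G (Imp a (Imp b (SConj a c)))" by (rule tr[OF pair])
  then show ?thesis by (rule mp[OF _ ax5])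
qed

lemma wel1: "deriv G (Imp (Wedge a b) a)" unfolding Wedge_def by (rule ax2)
lemma wel2: "deriv G (Imp (Wedge a b) b)" unfolding Wedge_def by (rule tr[OF ax4 ax2])

lemma wintro: "deriv G (Imp z x) \<Longrightarrow> deriv G (Imp z y) \<Longrightarrow> deriv G (Imp z (Wedge x y))"
proof -
  assume h1: "deriv G (Imp z x)" and h2: "deriv G (Imp z y)"
  have "deriv G (Imp (Imp z x) (Imp z (SConj z (Imp z x))))" by (rule exch[OF pair])
  then have a: "deriv G (Imp z (SConj z (Imp z x)))" by (rule mp[OF h1])
  have b: "deriv G (Imp (SConj x (Imp x z)) (SConj x (Imp x y)))" by (rule smono[OF postc[OF h2]])
  show ?thesis unfolding Wedge_def by (rule tr[OF tr[OF a ax4] b])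
qed

lemma inl: "deriv G (Imp f (Vee f c))"
  unfolding Vee_def by (rule wintro[OF exch[OF ii] kk])

lemma inr: "deriv G (Imp c (Vee f c))"
  unfolding Vee_def by (rule wintro[OF kk exch[OF ii]])

lemma cases: "deriv G (Imp x z) \<Longrightarrow> deriv G (Imp y z) \<Longrightarrow> deriv G (Imp (Vee x y) z)"
proof -
  assume hx: "deriv G (Imp x z)" and hy: "deriv G (Imp y z)"
  have "deriv G (Imp (Vee x y) (Imp (Imp x y) y))" unfolding Vee_def by (rule wel1)
  then have "deriv G (Imp (Imp x y) (Imp (Vee x y) y))" by (rule exch)
  then have c1: "deriv G (Imp (Imp x y) (Imp (Vee x y) z))" by (rule tr[OF _ postc[OF hy]])
  have "deriv G (Imp (Vee x y) (Imp (Imp y x) x))" unfolding Vee_def by (rule wel2)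
  then have "deriv G (Imp (Imp y x) (Imp (Vee x y) x))" by (rule exch)
  then have c2: "deriv G (Imp (Imp y x) (Imp (Vee x y) z))" by (rule tr[OF _ postc[OF hx]])
  show ?thesis by (rule mp[OF c2 mp[OF c1 ax7]])
qed

lemma vcomm: "deriv G (Imp (Vee x y) (Vee y x))" by (rule cases[OF inr inl])

lemma vrot: "deriv G (Imp (Vee (Vee x y) z) (Vee (Vee x z) y))"
proof -
  have a: "deriv G (Imp x (Vee (Vee x z) y))" by (rule tr[OF inl inl])
  have b: "deriv G (Imp y (Vee (Vee x z) y))" by (rule inr)
  have c: "deriv G (Imp z (Vee (Vee x z) y))" by (rule tr[OF inr inl])
  show ?thesis by (rule cases[OF cases[OF a b] c])
qed

lemma vmono: "deriv G (Imp c d) \<Longrightarrow> deriv G (Imp (Vee f c) (Vee f d))"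
  by (rule cases[OF inl], rule tr[OF _ inr])

lemma vmp: "deriv G (Imp (Vee f c) (Imp (Vee (Imp f g) c) (Vee g c)))"
proof -
  have a: "deriv G (Imp (Imp f g) (Imp f (Vee g c)))" by (rule postc[OF inl])
  have b: "deriv G (Imp c (Imp f (Vee g c)))" by (rule tr[OF inr kk])
  have "deriv G (Imp (Vee (Imp f g) c) (Imp f (Vee g c)))" by (rule cases[OF a b])
  then have c1: "deriv G (Imp f (Imp (Vee (Imp f g) c) (Vee g c)))" by (rule exch)
  have c2: "deriv G (Imp c (Imp (Vee (Imp f g) c) (Vee g c)))" by (rule tr[OF inr kk])
  show ?thesis by (rule cases[OF c1 c2])
qed

lemma fv_Vee[simp]: "fv (Vee a b) = fv a \<union> fv b"
  by (auto simp: Vee_def Wedge_def)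

lemma keyL:
  assumes "deriv H F" "H = insert A \<Gamma>" "sentence C"
  shows "deriv (insert (Vee A C) \<Gamma>) (Vee F C)"
  using assms
proof (induction rule: deriv.induct)
  case (ax \<phi> \<Gamma>')
  then show ?case by (intro mp[OF _ inl] deriv.ax)
next
  case (RC \<Gamma>' x \<chi>)
  then show ?case by (intro mp[OF _ inl] deriv.RC)
next
  case (hyp \<phi> \<Gamma>')
  show ?case
  proof (cases "\<phi> = A")
    case True
    then show ?thesis by (simp add: deriv.hyp)
  next
    case False
    then have "\<phi> \<in> \<Gamma>" using hyp by simp
    then show ?thesis by (intro mp[OF _ inl] deriv.hyp) simp
  qed
next
  case (MP \<Gamma>' \<phi> \<psi>)
  have i1: "deriv (insert (Vee A C) \<Gamma>) (Vee \<phi> C)" using MP by simp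
  have i2: "deriv (insert (Vee A C) \<Gamma>) (Vee (Imp \<phi> \<psi>) C)" using MP by simp
  show ?case by (rule mp[OF i2 mp[OF i1 vmp]])
next
  case (Gen \<Gamma>' \<phi> x)
  have "x \<notin> fv C" using Gen.prems by (simp add: sentence_def)
  then have "deriv (insert (Vee A C) \<Gamma>) (Imp (All x (Vee \<phi> C)) (Vee (All x \<phi>) C))"
    by (intro deriv.ax BLax.Lin)
  moreover have "deriv (insert (Vee A C) \<Gamma>) (Vee \<phi> C)" using Gen by simp
  ultimately show ?case using mp deriv.Gen by metis
next
  case (Inf \<phi> \<alpha> \<beta> \<Gamma>')
  have s: "sentence (Vee \<phi> C)" using Inf by (simp add: sentence_def)
  have "\<forall>n\<ge>1. deriv (insert (Vee A C) \<Gamma>) (Vee (Vee \<phi> C) (Imp \<alpha> (fpow n \<beta>)))"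
  proof (intro allI impI)
    fix n :: nat assume "n \<ge> 1"
    then have "deriv (insert (Vee A C) \<Gamma>) (Vee (Vee \<phi> (Imp \<alpha> (fpow n \<beta>))) C)"
      using Inf.IH Inf.prems by simp
    then show "deriv (insert (Vee A C) \<Gamma>) (Vee (Vee \<phi> C) (Imp \<alpha> (fpow n \<beta>)))"
      by (rule mp[OF _ vrot])
  qed
  then have "deriv (insert (Vee A C) \<Gamma>) (Vee (Vee \<phi> C) (Imp \<alpha> (SConj \<alpha> \<beta>)))"
    by (intro deriv.Inf s Inf.hyps)
  then show ?case by (rule mp[OF _ vrot])
qed

lemma cut:
  assumes "deriv H F" "H = insert A \<Gamma>" "\<Gamma> \<subseteq> \<Gamma>2" "deriv \<Gamma>2 A"
  shows "deriv \<Gamma>2 F"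
  using assms
proof (induction rule: deriv.induct)
  case (Inf \<phi> \<alpha> \<beta> \<Gamma>')
  then have "\<forall>n\<ge>1. deriv \<Gamma>2 (Vee \<phi> (Imp \<alpha> (fpow n \<beta>)))" by simp
  then show ?case by (intro deriv.Inf Inf.hyps)
next
  case (MP \<Gamma>' \<phi> \<psi>)
  then show ?case using deriv.MP by simp
next
  case (Gen \<Gamma>' \<phi> x)
  then show ?case using deriv.Gen by simp
qed (auto intro: deriv.ax deriv.RC deriv.hyp)

lemma fin_fv: "finite (fv \<phi>)"
proof (induction \<phi>)
  case (Atom P ts)
  have "\<And>t. finite (tvars t)" by (case_tac t) auto
  then show ?case by auto
qed auto

lemma subst_id: "subst x (Var x) \<phi> = \<phi>"
proof (induction \<phi>)
  case (Atom P ts)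
  have "\<And>t. tsubst x (Var x) t = t" by (case_tac t) auto
  then have "map (tsubst x (Var x)) ts = ts" by (induction ts) auto
  then show ?case by simp
qed auto

lemma substitutable_id: "substitutable (Var x) x \<phi>"
  by (induction \<phi>) auto

definition clos :: "nat list \<Rightarrow> ('c,'p) fm \<Rightarrow> ('c,'p) fm" where
  "clos xs \<phi> = foldr All xs \<phi>"

lemma fv_clos: "fv (clos xs \<phi>) = fv \<phi> - set xs"
  unfolding clos_def by (induction xs) auto

lemma clos_imp: "deriv G (Imp (clos xs \<phi>) \<phi>)"
proof (induction xs)
  case Nil
  then show ?case by (simp add: clos_def ii)
next
  case (Cons x xs)
  have "deriv G (Imp (All x (clos xs \<phi>)) (clos xs \<phi>))"
  proof -
    have "deriv G (Imp (All x (clos xs \<phi>)) (subst x (Var x) (clos xs \<phi>)))"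
      by (rule deriv.ax, rule BLax.All1, rule substitutable_id)
    then show ?thesis by (simp only: subst_id)
  qed
  then show ?case using tr[OF _ Cons.IH] by (simp add: clos_def)
qed

lemma clos_vee:
  assumes "sentence \<alpha>" "deriv G (Vee \<phi> \<alpha>)"
  shows "deriv G (Vee (clos xs \<phi>) \<alpha>)"
proof (induction xs)
  case Nil
  then show ?case using assms by (simp add: clos_def)
next
  case (Cons x xs)
  have "x \<notin> fv \<alpha>" using assms by (simp add: sentence_def)
  then have "deriv G (Imp (All x (Vee (clos xs \<phi>) \<alpha>)) (Vee (All x (clos xs \<phi>)) \<alpha>))"
    by (intro deriv.ax BLax.Lin)
  from mp[OF deriv.Gen[OF Cons.IH] this]
  have "deriv G (Vee (All x (clos xs \<phi>)) \<alpha>)" .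
  then show ?case by (simp add: clos_def)
qed

theorem mainTheorem3:
  fixes \<Gamma> :: "('c::countable, 'p::countable) fm set"
    and \<alpha> \<phi> \<psi> \<beta> :: "('c, 'p) fm"
  assumes "sentence \<alpha>"
    and "deriv (insert \<alpha> \<Gamma>) \<phi>"
    and "deriv (insert \<beta> \<Gamma>) \<psi>"
  shows "deriv (insert (Vee \<alpha> \<beta>) \<Gamma>) (Vee \<phi> \<psi>)"
proof -
  let ?G = "insert (Vee \<alpha> \<beta>) \<Gamma>"
  obtain xs where xs: "set xs = fv \<psi>" using finite_list[OF fin_fv[of \<psi>]] by blast
  let ?c = "clos xs \<psi>"
  have sc: "sentence ?c" unfolding sentence_def fv_clos xs by simp
  have 1: "deriv ?G (Vee \<beta> \<alpha>)" by (rule mp[OF deriv.hyp vcomm]) simp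
  have 2: "deriv (insert (Vee \<beta> \<alpha>) \<Gamma>) (Vee \<psi> \<alpha>)" by (rule keyL[OF assms(3) refl]) (simp add: assms(1))
  have 3: "deriv ?G (Vee \<psi> \<alpha>)" by (rule cut[OF 2 refl _ 1]) auto
  have 4: "deriv ?G (Vee \<alpha> ?c)" by (rule mp[OF clos_vee[OF assms(1) 3] vcomm])
  have 5: "deriv (insert (Vee \<alpha> ?c) \<Gamma>) (Vee \<phi> ?c)" by (rule keyL[OF assms(2) refl sc])
  have 6: "deriv ?G (Vee \<phi> ?c)" by (rule cut[OF 5 refl _ 4]) auto
  show ?thesis by (rule mp[OF 6 vmono[OF clos_imp]])
qed

end
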